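(* Let $U:\mathbb{R}^d\to\mathbb{R}$ be twice differentiable with $\mu\mathrm{I}_d\preceq\nabla^2U(z)\preceq L\mathrm{I}_d$ for all $z$, where $\mu\in(0,+\infty)$, $L\in[0,+\infty)$, and let $q_*=\mathrm{Normal}(m_*,\Sigma_* )\in\arg\min_{q\in\mathrm{BW}(\mathbb{R}^d)}\mathcal{F}(q)$. Then for any $q\in\mathrm{BW}(\mathbb{R}^d)$ and any coupling $\psi$ of $q$ and $q_*$, $$\mathbb{E}_{Z\sim q}\big\|\nabla U(Z)-\mathbb{E}_{q_*}\nabla U\big\|_2^2\le 4L\,\mathbb{E}_{(X,X_* )\sim\psi}[\mathrm{D}_U(X,X_* )]+2dL.$$
   Context: $\mathrm{BW}(\mathbb{R}^d)$ is the set of nondegenerate Gaussians on $\mathbb{R}^d$; $\mathcal{F}(q)=\int U\,\mathrm{d}q+\int\log q\,\mathrm{d}q$; $\mathrm{D}_U(x,y)=U(x)-U(y)-\langle\nabla U(y),x-y\rangle$. *)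

theory Defs
  imports "HOL-Probability.Probability"
begin

text \<open>Symmetric positive definite d x d matrices (covariances of nondegenerate Gaussians).\<close>
definition pos_def_mat :: "real^'n^'n \<Rightarrow> bool" where
  "pos_def_mat S \<longleftrightarrow> transpose S = S \<and> (\<forall>x. x \<noteq> 0 \<longrightarrow> x \<bullet> (S *v x) > 0)"

text \<open>Density of Normal(m, S) on R^d with respect to Lebesgue measure.\<close>
definition gauss_pdf :: "real^'n \<Rightarrow> real^'n^'n \<Rightarrow> real^'n \<Rightarrow> real" where
  "gauss_pdf m S x =
     (2 * pi) powr (- real CARD('n) / 2) * (det S) powr (- 1 / 2)
     * exp (- ((x - m) \<bullet> (matrix_inv S *v (x - m))) / 2)"

text \<open>The Gaussian measure Normal(m, S).\<close>
definition gauss :: "real^'n \<Rightarrow> real^'n^'n \<Rightarrow> (real^'n) measure" where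
  "gauss m S = density lborel (\<lambda>x. ennreal (gauss_pdf m S x))"

text \<open>BW(R^d): the set of nondegenerate Gaussians.\<close>
definition BW :: "(real^'n) measure set" where
  "BW = {gauss m S | m S. pos_def_mat S}"

text \<open>Free energy F(q) = int U dq + int log q dq, for q = Normal(m,S) in BW.\<close>
definition free_energy :: "(real^'n \<Rightarrow> real) \<Rightarrow> real^'n \<Rightarrow> real^'n^'n \<Rightarrow> real" where
  "free_energy U m S =
     (\<integral>x. U x \<partial>gauss m S) + (\<integral>x. ln (gauss_pdf m S x) \<partial>gauss m S)"

text \<open>Bregman divergence D_U(x,y) = U x - U y - <grad U y, x - y>.\<close>
definition bregman :: "(real^'n \<Rightarrow> real) \<Rightarrow> (real^'n \<Rightarrow> real^'n) \<Rightarrow> real^'n \<Rightarrow> real^'n \<Rightarrow> real" where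
  "bregman U gradU x y = U x - U y - gradU y \<bullet> (x - y)"

end

theory Submission
  imports Defs
begin

lemma taylor_bounds:
  fixes U :: "real^'n \<Rightarrow> real" and gradU :: "real^'n \<Rightarrow> real^'n"
    and H :: "real^'n \<Rightarrow> real^'n \<Rightarrow> real^'n"
  assumes grad: "\<And>z. (U has_derivative (\<lambda>h. gradU z \<bullet> h)) (at z)"
    and hess: "\<And>z. (gradU has_derivative H z) (at z)"
    and hess_lower: "\<And>z h. \<mu> * (norm h)\<^sup>2 \<le> h \<bullet> H z h"
    and hess_upper: "\<And>z h. h \<bullet> H z h \<le> L * (norm h)\<^sup>2"
  shows "U x + gradU x \<bullet> h + \<mu> / 2 * (norm h)\<^sup>2 \<le> U (x + h)
     \<and> U (x + h) \<le> U x + gradU x \<bullet> h + L / 2 * (norm h)\<^sup>2"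
proof -
  define g where "g = (\<lambda>s::real. U (x + s *\<^sub>R h))"
  define g1 where "g1 = (\<lambda>s::real. gradU (x + s *\<^sub>R h) \<bullet> h)"
  define g2 where "g2 = (\<lambda>s::real. H (x + s *\<^sub>R h) h \<bullet> h)"
  define diff where "diff = (\<lambda>k::nat. if k = 0 then g else if k = 1 then g1 else g2)"
  have line: "((\<lambda>s. x + s *\<^sub>R h) has_derivative (\<lambda>r. r *\<^sub>R h)) (at s)" for s
    by (auto intro!: derivative_eq_intros)
  have d1: "(g has_real_derivative g1 s) (at s)" for s
  proof -
    have "((\<lambda>s. U (x + s *\<^sub>R h)) has_derivative (\<lambda>r. gradU (x + s *\<^sub>R h) \<bullet> (r *\<^sub>R h))) (at s)"
      by (rule has_derivative_compose[OF line grad])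
    then show ?thesis unfolding g_def g1_def has_field_derivative_def
      by (rule has_derivative_eq_rhs) (auto simp: fun_eq_iff)
  qed
  have d2: "(g1 has_real_derivative g2 s) (at s)" for s
  proof -
    have "((\<lambda>s. gradU (x + s *\<^sub>R h)) has_derivative (\<lambda>r. H (x + s *\<^sub>R h) (r *\<^sub>R h))) (at s)"
      by (rule has_derivative_compose[OF line hess])
    then have "((\<lambda>s. gradU (x + s *\<^sub>R h) \<bullet> h) has_derivative (\<lambda>r. H (x + s *\<^sub>R h) (r *\<^sub>R h) \<bullet> h)) (at s)"
      by (rule has_derivative_inner_left)
    moreover have "linear (H (x + s *\<^sub>R h))"
      using hess has_derivative_linear by blast
    ultimately show ?thesis unfolding g1_def g2_def has_field_derivative_def
      by (elim has_derivative_eq_rhs) (auto simp: fun_eq_iff linear_scale)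
  qed
  have "\<exists>t. 0 < t \<and> t < 1 \<and> g 1 = (\<Sum>m<2. (diff m 0 / fact m) * (1 - 0)^m) + (diff 2 t / fact 2) * (1 - 0)^2"
    using Taylor[of 2 diff g 0 1 0 1] d1 d2 by (auto simp: diff_def)
  then obtain t where "g 1 = g 0 + g1 0 + g2 t / 2"
    by (auto simp: diff_def eval_nat_numeral)
  moreover have "\<mu> * (norm h)\<^sup>2 \<le> g2 t" "g2 t \<le> L * (norm h)\<^sup>2"
    unfolding g2_def using hess_lower hess_upper by (auto simp: inner_commute)
  ultimately show ?thesis by (simp add: g_def g1_def)
qed

lemma breg_lower:
  fixes U :: "real^'n \<Rightarrow> real" and gradU :: "real^'n \<Rightarrow> real^'n"
  assumes L: "L > 0"
    and conv: "\<And>x h. U x + gradU x \<bullet> h \<le> U (x + h)"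
    and smooth: "\<And>x h. U (x + h) \<le> U x + gradU x \<bullet> h + L / 2 * (norm h)\<^sup>2"
  shows "(norm (gradU x - gradU y))\<^sup>2 \<le> 2 * L * bregman U gradU x y"
proof -
  define g where "g = gradU x - gradU y"
  have s: "U (x + (- (1/L) *\<^sub>R g)) \<le> U x + gradU x \<bullet> (- (1/L) *\<^sub>R g) + L / 2 * (norm (- (1/L) *\<^sub>R g))\<^sup>2"
    by (rule smooth)
  have c: "U y + gradU y \<bullet> ((x + (- (1/L) *\<^sub>R g)) - y) \<le> U (y + ((x + (- (1/L) *\<^sub>R g)) - y))"
    by (rule conv)
  have n: "(norm (- (1/L) *\<^sub>R g))\<^sup>2 = (norm g)\<^sup>2 / L^2"
    using L by (simp add: power_divide power2_eq_square)
  have gg: "(norm g)\<^sup>2 = gradU x \<bullet> g - gradU y \<bullet> g"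
    by (simp add: g_def power2_norm_eq_inner inner_diff_left)
  from s c n have "U y + gradU y \<bullet> (x - y) - (1/L) * (gradU y \<bullet> g) \<le> U x - (1/L) * (gradU x \<bullet> g) + (norm g)\<^sup>2 / (2 * L)"
    using L by (simp add: inner_diff_right inner_add_right algebra_simps power2_eq_square)
  then have "(1/L) * (gradU x \<bullet> g - gradU y \<bullet> g) - (norm g)\<^sup>2 / (2 * L) \<le> bregman U gradU x y"
    unfolding bregman_def by (simp add: algebra_simps)
  moreover have "(1/L) * (gradU x \<bullet> g - gradU y \<bullet> g) = (norm g)\<^sup>2 / L"
    using gg by simp
  moreover have "(norm g)\<^sup>2 / L - (norm g)\<^sup>2 / (2 * L) = (norm g)\<^sup>2 / (2 * L)"
    using L by (simp add: field_simps)
  ultimately have "(norm g)\<^sup>2 / (2 * L) \<le> bregman U gradU x y"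
    by linarith
  then show ?thesis using L unfolding g_def by (simp add: pos_divide_le_eq mult.commute)
qed

lemma cocoercive:
  fixes U :: "real^'n \<Rightarrow> real" and gradU :: "real^'n \<Rightarrow> real^'n"
  assumes L: "L > 0"
    and conv: "\<And>x h. U x + gradU x \<bullet> h \<le> U (x + h)"
    and smooth: "\<And>x h. U (x + h) \<le> U x + gradU x \<bullet> h + L / 2 * (norm h)\<^sup>2"
  shows "(norm (gradU x - gradU y))\<^sup>2 \<le> L * ((gradU x - gradU y) \<bullet> (x - y))"
proof -
  have a1: "(norm (gradU x - gradU y))\<^sup>2 \<le> 2 * L * bregman U gradU x y"
    by (rule breg_lower[OF L conv smooth])
  have a2: "(norm (gradU y - gradU x))\<^sup>2 \<le> 2 * L * bregman U gradU y x"
    by (rule breg_lower[OF L conv smooth])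
  have a3: "norm (gradU y - gradU x) = norm (gradU x - gradU y)" by (rule norm_minus_commute)
  have e: "bregman U gradU x y + bregman U gradU y x = (gradU x - gradU y) \<bullet> (x - y)"
    unfolding bregman_def by (simp add: algebra_simps inner_diff_right inner_diff_left)
  have "L * ((gradU x - gradU y) \<bullet> (x - y)) = (2 * L * bregman U gradU x y + 2 * L * bregman U gradU y x) / 2"
    unfolding e[symmetric] by (simp add: algebra_simps)
  then show ?thesis using a1 a2[unfolded a3] by argo
qed

lemma grad_lipschitz:
  fixes U :: "real^'n \<Rightarrow> real" and gradU :: "real^'n \<Rightarrow> real^'n"
  assumes L: "L > 0"
    and conv: "\<And>x h. U x + gradU x \<bullet> h \<le> U (x + h)"
    and smooth: "\<And>x h. U (x + h) \<le> U x + gradU x \<bullet> h + L / 2 * (norm h)\<^sup>2"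
  shows "norm (gradU x - gradU y) \<le> L * norm (x - y)"
proof -
  have "(norm (gradU x - gradU y))\<^sup>2 \<le> L * ((gradU x - gradU y) \<bullet> (x - y))"
    by (rule cocoercive[OF L conv smooth])
  also have "\<dots> \<le> L * (norm (gradU x - gradU y) * norm (x - y))"
    using L by (intro mult_left_mono Cauchy_Schwarz_ineq2[THEN order_trans[OF abs_ge_self]]) auto
  finally have *: "norm (gradU x - gradU y) * norm (gradU x - gradU y) \<le> norm (gradU x - gradU y) * (L * norm (x - y))"
    by (simp add: power2_eq_square algebra_simps)
  show ?thesis
  proof (cases "norm (gradU x - gradU y) = 0")
    case True then show ?thesis using L by simp
  next
    case False then show ?thesis using * by (simp add: mult_le_cancel_left)
  qed
qed

lemma posdef_inj:
  fixes S :: "real^'n^'n"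
  assumes "\<And>x. x \<noteq> 0 \<Longrightarrow> x \<bullet> (S *v x) > 0"
  shows "invertible S"
proof -
  have "inj ((*v) S)"
  proof (rule injI)
    fix x y assume "S *v x = S *v y"
    then have "S *v (x - y) = 0" by (simp add: matrix_vector_mult_diff_distrib)
    then show "x = y" using assms[of "x - y"] by (cases "x - y = 0") auto
  qed
  then have "det (matrix ((*v) S)) \<noteq> 0"
    by (subst det_nz_iff_inj) auto
  then show ?thesis by (simp add: invertible_det_nz)
qed

lemma posdef_det_pos:
  fixes S :: "real^'n^'n"
  assumes "pos_def_mat S"
  shows "det S > 0"
proof (rule ccontr)
  assume "\<not> det S > 0"
  define f where "f = (\<lambda>s::real. det ((1 - s) *\<^sub>R mat 1 + s *\<^sub>R S))"
  have feq: "f = (\<lambda>s. \<Sum>p\<in>{p. p permutes (UNIV::'n set)}. of_int (sign p) *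
      (\<Prod>i\<in>UNIV. (1 - s) * (mat 1 $ i $ p i) + s * (S $ i $ p i)))"
    by (simp add: f_def det_def fun_eq_iff)
  have cont: "continuous_on {0..1} f"
    unfolding feq by (intro continuous_intros)
  have "f 1 \<le> 0" "0 \<le> f 0" using \<open>\<not> det S > 0\<close> by (auto simp: f_def)
  then obtain s where s: "0 \<le> s" "s \<le> 1" "f s = 0"
    using IVT2'[of f 1 0 0] cont by auto
  have "invertible ((1 - s) *\<^sub>R mat 1 + s *\<^sub>R S)"
  proof (rule posdef_inj)
    fix x :: "real^'n" assume "x \<noteq> 0"
    have "x \<bullet> (((1 - s) *\<^sub>R mat 1 + s *\<^sub>R S) *v x) = (1 - s) * (x \<bullet> x) + s * (x \<bullet> (S *v x))"
      by (simp add: matrix_vector_mult_add_rdistrib scaleR_matrix_vector_assoc[symmetric] inner_add_right)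
    moreover have "x \<bullet> x > 0" using \<open>x \<noteq> 0\<close> by simp
    moreover have "x \<bullet> (S *v x) > 0" using assms \<open>x \<noteq> 0\<close> unfolding pos_def_mat_def by auto
    moreover have "(1 - s) * (x \<bullet> x) \<ge> 0" using s by simp
    moreover have "s * (x \<bullet> (S *v x)) \<ge> 0" using s \<open>x \<bullet> (S *v x) > 0\<close> by simp
    moreover have "(1 - s) * (x \<bullet> x) > 0 \<or> s * (x \<bullet> (S *v x)) > 0"
      using s \<open>x \<bullet> x > 0\<close> \<open>x \<bullet> (S *v x) > 0\<close> by (cases "s = 0") auto
    ultimately show "x \<bullet> (((1 - s) *\<^sub>R mat 1 + s *\<^sub>R S) *v x) > 0"
      by linarith
  qed
  then show False using s by (simp add: invertible_det_nz f_def)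
qed

lemma minv:
  fixes S :: "real^'n^'n"
  assumes "invertible S"
  shows "S ** matrix_inv S = mat 1" "matrix_inv S ** S = mat 1"
proof -
  have "\<exists>A'. S ** A' = mat 1 \<and> A' ** S = mat 1" using assms unfolding invertible_def by blast
  then have "S ** matrix_inv S = mat 1 \<and> matrix_inv S ** S = mat 1"
    unfolding matrix_inv_def by (rule someI_ex)
  then show "S ** matrix_inv S = mat 1" "matrix_inv S ** S = mat 1" by auto
qed

lemma minv_scale:
  fixes S :: "real^'n^'n"
  assumes "invertible S" "k \<noteq> 0"
  shows "matrix_inv (k *\<^sub>R S) = (1 / k) *\<^sub>R matrix_inv S"
proof -
  have i: "invertible (k *\<^sub>R S)" by (rule scalar_invertible[OF assms(2) assms(1)])
  have "matrix_inv (k *\<^sub>R S) = matrix_inv (k *\<^sub>R S) ** (S ** matrix_inv S)"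
    using minv(1)[OF assms(1)] by simp
  also have "\<dots> = (matrix_inv (k *\<^sub>R S) ** S) ** matrix_inv S" by (simp add: matrix_mul_assoc)
  also have "matrix_inv (k *\<^sub>R S) ** S = (1 / k) *\<^sub>R (matrix_inv (k *\<^sub>R S) ** (k *\<^sub>R S))"
    using assms(2) by (simp add: matrix_scalar_ac scalar_matrix_assoc[symmetric])
  also have "\<dots> = (1 / k) *\<^sub>R mat 1" using minv(2)[OF i] by simp
  finally show ?thesis by (simp add: scalar_matrix_assoc[symmetric])
qed

lemma det_scale:
  fixes S :: "real^'n^'n"
  shows "det (k *\<^sub>R S) = k ^ CARD('n) * det S"
proof -
  have "k *\<^sub>R S = (\<chi> i. k *s (S $ i))" by (vector)
  then have "det (k *\<^sub>R S) = prod (\<lambda>i. k) (UNIV::'n set) * det ((\<chi> i. S $ i)::real^'n^'n)"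
    using det_rows_mul[of "\<lambda>i. k" "\<lambda>i. S $ i"] by simp
  then show ?thesis by simp
qed

lemma posdef_scale:
  fixes S :: "real^'n^'n"
  assumes "pos_def_mat S" "k > 0"
  shows "pos_def_mat (k *\<^sub>R S)"
  using assms unfolding pos_def_mat_def
  by (auto simp: transpose_scalar scaleR_matrix_vector_assoc[symmetric])

lemma quad_upper:
  fixes A :: "real^'n^'n"
  shows "\<bar>y \<bullet> (A *v y)\<bar> \<le> onorm ((*v) A) * (norm y)\<^sup>2"
proof -
  have "\<bar>y \<bullet> (A *v y)\<bar> \<le> norm y * norm (A *v y)" by (rule Cauchy_Schwarz_ineq2)
  also have "\<dots> \<le> norm y * (onorm ((*v) A) * norm y)"
    by (intro mult_left_mono onorm) auto
  finally show ?thesis by (simp add: power2_eq_square algebra_simps)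
qed

lemma quad_lower:
  fixes A :: "real^'n^'n"
  assumes pos: "\<And>x. x \<noteq> 0 \<Longrightarrow> x \<bullet> (A *v x) > 0"
  shows "\<exists>l>0. \<forall>y. l * (norm y)\<^sup>2 \<le> y \<bullet> (A *v y)"
proof -
  obtain b :: "real^'n" where b: "b \<in> Basis" using nonempty_Basis by blast
  have ne: "sphere (0::real^'n) 1 \<noteq> {}" using b by (auto simp: norm_Basis)
  have "continuous_on (sphere 0 1) (\<lambda>y::real^'n. y \<bullet> (A *v y))"
    by (intro continuous_intros)
  then obtain z where z: "z \<in> sphere 0 1" and zmin: "\<And>y. y \<in> sphere 0 1 \<Longrightarrow> z \<bullet> (A *v z) \<le> y \<bullet> (A *v y)"
    using continuous_attains_inf[OF compact_sphere ne] by blast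
  have z0: "z \<noteq> 0" using z by auto
  define l where "l = z \<bullet> (A *v z)"
  have lpos: "l > 0" using pos[OF z0] by (simp add: l_def)
  have "l * (norm y)\<^sup>2 \<le> y \<bullet> (A *v y)" for y
  proof (cases "y = 0")
    case True then show ?thesis by simp
  next
    case False
    define u where "u = (1 / norm y) *\<^sub>R y"
    have "u \<in> sphere 0 1" using False by (simp add: u_def)
    then have "l \<le> u \<bullet> (A *v u)" using zmin by (simp add: l_def)
    also have "u \<bullet> (A *v u) = (y \<bullet> (A *v y)) / (norm y)\<^sup>2"
      by (simp add: u_def matrix_vector_mult_scaleR power2_eq_square)
    finally show ?thesis using False by (simp add: pos_le_divide_eq)
  qed
  then show ?thesis using lpos by blast
qed

lemma cont_mv: "continuous_on X (\<lambda>x. A *v (x - m))"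
  for A :: "real^'n^'n"
  by (rule continuous_on_compose[of X "\<lambda>x. x - m" "(*v) A", unfolded o_def]) (auto intro: continuous_intros)

lemma gauss_pdf_cont: "continuous_on UNIV (gauss_pdf m S)"
  unfolding gauss_pdf_def[abs_def] by (intro continuous_intros cont_mv) auto

lemma gauss_pdf_meas[measurable]: "gauss_pdf m S \<in> borel_measurable borel"
  by (rule borel_measurable_continuous_onI[OF gauss_pdf_cont])

lemma gauss_pdf_pos:
  assumes "pos_def_mat S" shows "gauss_pdf m S x > 0"
  using posdef_det_pos[OF assms] unfolding gauss_pdf_def by simp

lemma sets_gauss[simp, measurable_cong]: "sets (gauss m S) = sets borel"
  by (simp add: gauss_def)

lemma space_gauss[simp]: "space (gauss m S) = UNIV"
  by (simp add: gauss_def)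

lemma sq_powr:
  fixes a :: real assumes a: "a > 0" shows "(a^2) powr (-1/2) = inverse a"
proof -
  have "a^2 = a powr (real 2)" using powr_realpow[OF a, of 2] by simp
  then have "(a^2) powr (-1/2) = a powr (real 2 * (-1/2))" by (simp only: powr_powr)
  also have "real 2 * (-1/2) = - 1" by simp
  finally show ?thesis using a by (simp add: powr_minus)
qed

lemma pdf_scale:
  fixes S :: "real^'n^'n"
  assumes S: "pos_def_mat S" and t: "t \<noteq> 0"
  shows "gauss_pdf m ((t^2) *\<^sub>R S) (m + t *\<^sub>R (x - m)) * \<bar>t\<bar> ^ CARD('n) = gauss_pdf m S x"
proof -
  have inv: "invertible S" using S unfolding pos_def_mat_def by (intro posdef_inj) auto
  have D: "det S > 0" by (rule posdef_det_pos[OF S])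
  have mi: "matrix_inv ((t^2) *\<^sub>R S) = (1 / t^2) *\<^sub>R matrix_inv S"
    using t by (simp add: minv_scale inv)
  have q: "(m + t *\<^sub>R (x - m) - m) \<bullet> (matrix_inv ((t^2) *\<^sub>R S) *v (m + t *\<^sub>R (x - m) - m))
      = (x - m) \<bullet> (matrix_inv S *v (x - m))"
    using t unfolding mi by (simp add: scaleR_matrix_vector_assoc[symmetric] matrix_vector_mult_scaleR power2_eq_square)
  have a: "\<bar>t\<bar> ^ CARD('n) > 0" using t by simp
  have "((t^2) ^ CARD('n) * det S) powr (-1/2) = ((t^2) ^ CARD('n)) powr (-1/2) * det S powr (-1/2)"
    using D by (simp add: powr_mult)
  also have "((t^2) ^ CARD('n)) powr (-1/2) = inverse (\<bar>t\<bar> ^ CARD('n))"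
  proof -
    have "(t^2) ^ CARD('n) = (\<bar>t\<bar> ^ CARD('n))^2"
      by (simp add: power_mult[symmetric] power_even_abs mult.commute)
    then show ?thesis using sq_powr[OF a] by simp
  qed
  finally have dd: "(det ((t^2) *\<^sub>R S)) powr (-1/2) * \<bar>t\<bar> ^ CARD('n) = det S powr (-1/2)"
    using a by (simp add: det_scale)
  show ?thesis unfolding gauss_pdf_def q using dd
    by (simp add: algebra_simps)
qed

lemma nn_affine:
  fixes g :: "real^'n \<Rightarrow> ennreal"
  assumes t: "t \<noteq> 0" and g[measurable]: "g \<in> borel_measurable borel"
  shows "(\<integral>\<^sup>+y. g y \<partial>lborel) = (\<integral>\<^sup>+x. ennreal (\<bar>t\<bar> ^ CARD('n)) * g (c + t *\<^sub>R x) \<partial>lborel)"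
proof -
  have eq: "lborel = density (distr lborel borel (\<lambda>x::real^'n. c + t *\<^sub>R x)) (\<lambda>_. \<bar>t\<bar> ^ DIM(real^'n))"
    by (rule lborel_affine[OF t])
  have "(\<integral>\<^sup>+y. g y \<partial>lborel) = (\<integral>\<^sup>+y. g y \<partial>(density (distr lborel borel (\<lambda>x::real^'n. c + t *\<^sub>R x)) (\<lambda>_. \<bar>t\<bar> ^ DIM(real^'n))))"
    by (rule arg_cong[OF eq])
  also have "\<dots> = (\<integral>\<^sup>+y. ennreal (\<bar>t\<bar> ^ DIM(real^'n)) * g y \<partial>(distr lborel borel (\<lambda>x::real^'n. c + t *\<^sub>R x)))"
    by (subst nn_integral_density) auto
  also have "\<dots> = (\<integral>\<^sup>+x. ennreal (\<bar>t\<bar> ^ DIM(real^'n)) * g (c + t *\<^sub>R x) \<partial>lborel)"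
    by (subst nn_integral_distr) auto
  finally show ?thesis by simp
qed

lemma gauss_push:
  fixes S :: "real^'n^'n"
  assumes S: "pos_def_mat S" and t: "t \<noteq> 0"
  shows "distr (gauss m S) lborel (\<lambda>x. m + t *\<^sub>R (x - m)) = gauss m ((t^2) *\<^sub>R S)"
proof (rule measure_eqI)
  show "sets (distr (gauss m S) lborel (\<lambda>x. m + t *\<^sub>R (x - m))) = sets (gauss m ((t^2) *\<^sub>R S))"
    by simp
  fix A assume "A \<in> sets (distr (gauss m S) lborel (\<lambda>x. m + t *\<^sub>R (x - m)))"
  then have A[measurable]: "A \<in> sets borel" by simp
  have T: "(\<lambda>x. m + t *\<^sub>R (x - m)) = (\<lambda>x. (m - t *\<^sub>R m) + t *\<^sub>R x)"
    by (auto simp: algebra_simps)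
  have "emeasure (gauss m ((t^2) *\<^sub>R S)) A = (\<integral>\<^sup>+y. ennreal (gauss_pdf m ((t^2) *\<^sub>R S) y) * indicator A y \<partial>lborel)"
    unfolding gauss_def by (subst emeasure_density) (auto simp: nn_integral_set_ennreal mult.commute)
  also have "\<dots> = (\<integral>\<^sup>+x. ennreal (\<bar>t\<bar> ^ CARD('n)) * (ennreal (gauss_pdf m ((t^2) *\<^sub>R S) ((m - t *\<^sub>R m) + t *\<^sub>R x)) * indicator A ((m - t *\<^sub>R m) + t *\<^sub>R x)) \<partial>lborel)"
    by (rule nn_affine[OF t]) measurable
  also have "\<dots> = (\<integral>\<^sup>+x. ennreal (gauss_pdf m S x) * indicator ((\<lambda>x. m + t *\<^sub>R (x - m)) -` A) x \<partial>lborel)"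
  proof (intro nn_integral_cong)
    fix x
    define p where "p = m + t *\<^sub>R (x - m)"
    have pe: "(m - t *\<^sub>R m) + t *\<^sub>R x = p" unfolding p_def by (simp add: algebra_simps)
    have pre: "x \<in> (\<lambda>x. m + t *\<^sub>R (x - m)) -` A \<longleftrightarrow> p \<in> A" unfolding p_def by simp
    have e1: "gauss_pdf m ((t^2) *\<^sub>R S) p * \<bar>t\<bar> ^ CARD('n) = gauss_pdf m S x"
      unfolding p_def by (rule pdf_scale[OF S t])
    have e2: "gauss_pdf m ((t^2) *\<^sub>R S) p \<ge> 0"
      using gauss_pdf_pos[OF posdef_scale[OF S]] t by (simp add: less_imp_le)
    have "ennreal (\<bar>t\<bar> ^ CARD('n)) * ennreal (gauss_pdf m ((t^2) *\<^sub>R S) p) = ennreal (gauss_pdf m S x)"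
      using e1 e2 by (simp add: ennreal_mult'[symmetric] mult.commute)
    then show "ennreal (\<bar>t\<bar> ^ CARD('n)) * (ennreal (gauss_pdf m ((t^2) *\<^sub>R S) ((m - t *\<^sub>R m) + t *\<^sub>R x)) * indicator A ((m - t *\<^sub>R m) + t *\<^sub>R x))
       = ennreal (gauss_pdf m S x) * indicator ((\<lambda>x. m + t *\<^sub>R (x - m)) -` A) x"
      unfolding pe by (simp add: mult.assoc[symmetric] indicator_def pre del: vimage_eq)
  qed
  also have "\<dots> = emeasure (gauss m S) ((\<lambda>x. m + t *\<^sub>R (x - m)) -` A)"
  proof -
    have fm: "(\<lambda>x::real^'n. m + t *\<^sub>R (x - m)) \<in> borel_measurable borel" by measurable
    have pm: "(\<lambda>x. m + t *\<^sub>R (x - m)) -` A \<in> sets borel"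
      using measurable_sets[OF fm A] by simp
    show ?thesis unfolding gauss_def
      using pm by (subst emeasure_density) (auto simp: nn_integral_set_ennreal mult.commute)
  qed
  also have "\<dots> = emeasure (distr (gauss m S) lborel (\<lambda>x. m + t *\<^sub>R (x - m))) A"
    by (subst emeasure_distr) auto
  finally show "emeasure (distr (gauss m S) lborel (\<lambda>x. m + t *\<^sub>R (x - m))) A = emeasure (gauss m ((t^2) *\<^sub>R S)) A"
    by simp
qed

lemma pdf_form:
  "gauss_pdf m S x = gauss_pdf m S m * exp (- ((x - m) \<bullet> (matrix_inv S *v (x - m))) / 2)"
  unfolding gauss_pdf_def by simp

lemma minv_pos:
  fixes S :: "real^'n^'n"
  assumes S: "pos_def_mat S" and y: "y \<noteq> 0"
  shows "y \<bullet> (matrix_inv S *v y) > 0"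
proof -
  have inv: "invertible S" using S unfolding pos_def_mat_def by (intro posdef_inj) auto
  define v where "v = matrix_inv S *v y"
  have Sv: "S *v v = y" unfolding v_def using minv(1)[OF inv] by (simp add: matrix_vector_mul_assoc)
  have "v \<noteq> 0" using Sv y by auto
  then have "v \<bullet> (S *v v) > 0" using S unfolding pos_def_mat_def by auto
  then show ?thesis using Sv by (simp add: v_def inner_commute)
qed

lemma emeasure_gauss_UNIV:
  "emeasure (gauss m S) UNIV = (\<integral>\<^sup>+x. ennreal (gauss_pdf m S x) \<partial>lborel)"
  unfolding gauss_def by (subst emeasure_density) auto

lemma gauss_prob_scale:
  fixes S :: "real^'n^'n"
  assumes P: "prob_space (gauss m S)" and S: "pos_def_mat S" and t: "t \<noteq> 0"
  shows "prob_space (gauss m ((t^2) *\<^sub>R S))"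
proof -
  have "prob_space (distr (gauss m S) lborel (\<lambda>x. m + t *\<^sub>R (x - m)))"
    by (rule prob_space.prob_space_distr[OF P]) simp
  then show ?thesis using gauss_push[OF S t] by simp
qed

lemma second_moment_nn:
  fixes S :: "real^'n^'n"
  assumes P: "prob_space (gauss m S)" and S: "pos_def_mat S"
  shows "(\<integral>\<^sup>+x. ennreal ((norm (x - m))\<^sup>2) \<partial>gauss m S) < \<infinity>"
proof -
  define Q where "Q = (\<lambda>y. y \<bullet> (matrix_inv S *v y))"
  obtain l where l: "l > 0" "\<And>y. l * (norm y)\<^sup>2 \<le> Q y"
    using quad_lower[of "matrix_inv S"] minv_pos[OF S] unfolding Q_def by blast
  have inv: "invertible S" using S unfolding pos_def_mat_def by (intro posdef_inj) auto
  have S2: "pos_def_mat (2 *\<^sub>R S)" by (rule posdef_scale[OF S]) simp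
  have P2: "prob_space (gauss m (2 *\<^sub>R S))"
    using gauss_prob_scale[OF P S, of "sqrt 2"] by simp
  have one: "(\<integral>\<^sup>+x. ennreal (gauss_pdf m (2 *\<^sub>R S) x) \<partial>lborel) = 1"
    using prob_space.emeasure_space_1[OF P2] emeasure_gauss_UNIV[of m "2 *\<^sub>R S"] by simp
  have mi2: "matrix_inv (2 *\<^sub>R S) = (1/2) *\<^sub>R matrix_inv S" by (rule minv_scale[OF inv]) simp
  define c1 where "c1 = gauss_pdf m S m"
  define c2 where "c2 = gauss_pdf m (2 *\<^sub>R S) m"
  have c1: "c1 > 0" unfolding c1_def by (rule gauss_pdf_pos[OF S])
  have c2: "c2 > 0" unfolding c2_def by (rule gauss_pdf_pos[OF S2])
  define K where "K = 4 * c1 / (l * c2)"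
  have K: "K > 0" unfolding K_def using c1 c2 l by simp
  have pt: "gauss_pdf m S x * (norm (x - m))\<^sup>2 \<le> K * gauss_pdf m (2 *\<^sub>R S) x" for x
  proof -
    define u where "u = Q (x - m)"
    have u0: "u \<ge> 0" using l(2)[of "x - m"] l(1) unfolding u_def
      by (meson order_trans zero_le_mult_iff zero_le_power2 less_imp_le)
    have f1: "gauss_pdf m S x = c1 * exp (- u / 2)"
      unfolding c1_def u_def Q_def by (subst pdf_form) simp
    have f2: "gauss_pdf m (2 *\<^sub>R S) x = c2 * exp (- u / 4)"
      unfolding c2_def u_def Q_def by (subst pdf_form) (simp add: mi2 scaleR_matrix_vector_assoc[symmetric])
    have nb: "(norm (x - m))\<^sup>2 \<le> u / l" using l u_def by (simp add: pos_le_divide_eq mult.commute)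
    have "u / 4 \<le> exp (u / 4)" using exp_ge_add_one_self[of "u/4"] by linarith
    then have "u * exp (- u / 2) \<le> 4 * exp (u / 4) * exp (- u / 2)"
      by (intro mult_right_mono) auto
    also have "4 * exp (u / 4) * exp (- u / 2) = 4 * exp (- u / 4)"
      by (simp add: mult.assoc exp_add[symmetric])
    finally have ue: "u * exp (- u / 2) \<le> 4 * exp (- u / 4)" .
    have "gauss_pdf m S x * (norm (x - m))\<^sup>2 \<le> c1 * exp (- u / 2) * (u / l)"
      unfolding f1 using c1 nb by (intro mult_left_mono) auto
    also have "\<dots> = (c1 / l) * (u * exp (- u / 2))" by simp
    also have "\<dots> \<le> (c1 / l) * (4 * exp (- u / 4))"
      using c1 l ue by (intro mult_left_mono) auto
    also have "\<dots> = K * gauss_pdf m (2 *\<^sub>R S) x"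
      unfolding f2 K_def using c2 l by (simp add: field_simps)
    finally show ?thesis .
  qed
  have "(\<integral>\<^sup>+x. ennreal ((norm (x - m))\<^sup>2) \<partial>gauss m S)
      = (\<integral>\<^sup>+x. ennreal (gauss_pdf m S x) * ennreal ((norm (x - m))\<^sup>2) \<partial>lborel)"
    unfolding gauss_def by (subst nn_integral_density) auto
  also have "\<dots> \<le> (\<integral>\<^sup>+x. ennreal K * ennreal (gauss_pdf m (2 *\<^sub>R S) x) \<partial>lborel)"
  proof (intro nn_integral_mono)
    fix x
    have "ennreal (gauss_pdf m S x) * ennreal ((norm (x - m))\<^sup>2) = ennreal (gauss_pdf m S x * (norm (x - m))\<^sup>2)"
      using gauss_pdf_pos[OF S, of m x] by (simp add: ennreal_mult')
    also have "\<dots> \<le> ennreal (K * gauss_pdf m (2 *\<^sub>R S) x)" by (rule ennreal_leI[OF pt])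
    also have "\<dots> = ennreal K * ennreal (gauss_pdf m (2 *\<^sub>R S) x)"
      using K gauss_pdf_pos[OF S2, of m x] by (simp add: ennreal_mult)
    finally show "ennreal (gauss_pdf m S x) * ennreal ((norm (x - m))\<^sup>2) \<le> ennreal K * ennreal (gauss_pdf m (2 *\<^sub>R S) x)" .
  qed
  also have "\<dots> = ennreal K * 1"
    by (subst nn_integral_cmult) (auto simp: one)
  finally show ?thesis using ennreal_less_top[of K] by (simp add: le_less_trans)
qed

lemma limit_le:
  fixes G d c :: real
  assumes "\<And>s. 0 < s \<Longrightarrow> s < 1 \<Longrightarrow> G \<le> d / (1 - s) + c * s"
  shows "G \<le> d"
proof -
  have "((\<lambda>s. d / (1 - s) + c * s) \<longlongrightarrow> d / (1 - 0) + c * 0) (at_right 0)"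
    by (intro tendsto_intros) auto
  then have lim: "((\<lambda>s. d / (1 - s) + c * s) \<longlongrightarrow> d) (at_right 0)" by simp
  have ev: "eventually (\<lambda>s. G \<le> d / (1 - s) + c * s) (at_right (0::real))"
    unfolding eventually_at_right_field using assms by (intro exI[of _ 1]) auto
  show ?thesis
    by (rule tendsto_le[OF _ lim tendsto_const ev]) simp
qed

lemma ln_bound:
  fixes s :: real assumes "0 < s" "s < 1"
  shows "- ln (1 - s) \<le> s / (1 - s)"
proof -
  have "ln (inverse (1 - s)) \<le> inverse (1 - s) - 1"
    using assms by (intro ln_le_minus_one) auto
  moreover have "inverse (1 - s) - 1 = s / (1 - s)" using assms by (simp add: field_simps)
  ultimately show ?thesis by (simp add: ln_inverse)
qed

lemma le_one_plus_sq: "(a::real) \<ge> 0 \<Longrightarrow> a \<le> 1 + a^2"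
proof -
  assume a: "a \<ge> 0"
  have "0 \<le> (a - 1)^2" by simp
  then have "2 * a \<le> 1 + a^2" by (simp add: power2_eq_square algebra_simps)
  then show ?thesis using a by linarith
qed

lemma norm_diff_sq:
  fixes a b :: "'a::real_inner"
  shows "(norm (a - b))\<^sup>2 = (norm a)\<^sup>2 - 2 * (a \<bullet> b) + (norm b)\<^sup>2"
  by (simp add: power2_norm_eq_inner inner_diff_left inner_diff_right inner_commute)

lemma variance_bound:
  fixes U :: "real^'n \<Rightarrow> real" and gradU :: "real^'n \<Rightarrow> real^'n"
    and S :: "real^'n^'n"
  assumes P: "prob_space (gauss m S)" and S: "pos_def_mat S" and L: "L > 0"
    and conv: "\<And>x h. U x + gradU x \<bullet> h \<le> U (x + h)"
    and smooth: "\<And>x h. U (x + h) \<le> U x + gradU x \<bullet> h + L / 2 * (norm h)\<^sup>2"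
    and Um[measurable]: "U \<in> borel_measurable borel"
    and gm[measurable]: "gradU \<in> borel_measurable borel"
    and mini: "\<And>t. 0 < t \<Longrightarrow> t < 1 \<Longrightarrow> free_energy U m S \<le> free_energy U m ((t^2) *\<^sub>R S)"
  shows "integrable (gauss m S) (\<lambda>x. (norm (gradU x - (\<integral>y. gradU y \<partial>gauss m S)))\<^sup>2)"
    and "(\<integral>x. (norm (gradU x - (\<integral>y. gradU y \<partial>gauss m S)))\<^sup>2 \<partial>gauss m S) \<le> L * real CARD('n)"
proof -
  interpret P: prob_space "gauss m S" by (rule P)
  let ?P = "gauss m S"
  have pU: "measure ?P UNIV = 1" using P.prob_space by simp
  have M2: "integrable ?P (\<lambda>x. (norm (x - m))\<^sup>2)"
    by (rule integrableI_nonneg) (use second_moment_nn[OF P S] in auto)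
  have N1: "integrable ?P (\<lambda>x. norm (x - m))"
    by (rule Bochner_Integration.integrable_bound[of _ "\<lambda>x. 1 + (norm (x - m))\<^sup>2"])
       (auto intro!: M2 le_one_plus_sq)
  have V1: "integrable ?P (\<lambda>x. x - m)"
    by (rule Bochner_Integration.integrable_bound[OF N1]) auto
  have Ubound: "\<bar>U y\<bar> \<le> \<bar>U m\<bar> + norm (gradU m) * norm (y - m) + L / 2 * (norm (y - m))\<^sup>2" for y
  proof -
    have a: "U m + gradU m \<bullet> (y - m) \<le> U y" using conv[of m "y - m"] by simp
    have b: "U y \<le> U m + gradU m \<bullet> (y - m) + L / 2 * (norm (y - m))\<^sup>2" using smooth[of m "y - m"] by simp
    have c: "\<bar>gradU m \<bullet> (y - m)\<bar> \<le> norm (gradU m) * norm (y - m)" by (rule Cauchy_Schwarz_ineq2)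
    have d: "0 \<le> L / 2 * (norm (y - m))\<^sup>2" using L by simp
    show ?thesis using a b c d by linarith
  qed
  have IUT: "integrable ?P (\<lambda>x. U (m + t *\<^sub>R (x - m)))" for t
  proof (rule Bochner_Integration.integrable_bound[of _ "\<lambda>x. \<bar>U m\<bar> + (norm (gradU m) * \<bar>t\<bar>) * norm (x - m) + (L / 2 * t^2) * (norm (x - m))\<^sup>2"])
    show "integrable ?P (\<lambda>x. \<bar>U m\<bar> + (norm (gradU m) * \<bar>t\<bar>) * norm (x - m) + (L / 2 * t^2) * (norm (x - m))\<^sup>2)"
      by (simp add: N1 M2)
  next
    show "(\<lambda>x. U (m + t *\<^sub>R (x - m))) \<in> borel_measurable ?P" by simp
  next
    show "AE x in ?P. norm (U (m + t *\<^sub>R (x - m))) \<le> norm (\<bar>U m\<bar> + (norm (gradU m) * \<bar>t\<bar>) * norm (x - m) + (L / 2 * t^2) * (norm (x - m))\<^sup>2)"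
    proof (intro AE_I2)
      fix x
      have "\<bar>U (m + t *\<^sub>R (x - m))\<bar> \<le> \<bar>U m\<bar> + norm (gradU m) * norm (t *\<^sub>R (x - m)) + L / 2 * (norm (t *\<^sub>R (x - m)))\<^sup>2"
        using Ubound[of "m + t *\<^sub>R (x - m)"] by simp
      also have "\<dots> = \<bar>U m\<bar> + (norm (gradU m) * \<bar>t\<bar>) * norm (x - m) + (L / 2 * t^2) * (norm (x - m))\<^sup>2"
        by (simp add: power_mult_distrib)
      finally show "norm (U (m + t *\<^sub>R (x - m))) \<le> norm (\<bar>U m\<bar> + (norm (gradU m) * \<bar>t\<bar>) * norm (x - m) + (L / 2 * t^2) * (norm (x - m))\<^sup>2)"
        using L by simp
    qed
  qed
  have IU: "integrable ?P U" using IUT[of 1] by simp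
  have lip: "norm (gradU x - gradU y) \<le> L * norm (x - y)" for x y
    by (rule grad_lipschitz[OF L conv smooth])
  have IG: "integrable ?P gradU"
  proof (rule Bochner_Integration.integrable_bound[of _ "\<lambda>x. norm (gradU m) + L * norm (x - m)"])
    show "integrable ?P (\<lambda>x. norm (gradU m) + L * norm (x - m))"
      by (simp add: N1)
    show "AE x in ?P. norm (gradU x) \<le> norm (norm (gradU m) + L * norm (x - m))"
    proof (intro AE_I2)
      fix x
      have "norm (gradU x) \<le> norm (gradU m) + norm (gradU x - gradU m)" by (rule norm_triangle_sub)
      also have "\<dots> \<le> norm (gradU m) + L * norm (x - m)" using lip[of x m] by simp
      finally show "norm (gradU x) \<le> norm (norm (gradU m) + L * norm (x - m))" by simp
    qed
  qed simp
  have IW2: "integrable ?P (\<lambda>x. (norm (gradU x - gradU m))\<^sup>2)"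
  proof (rule Bochner_Integration.integrable_bound[of _ "\<lambda>x. L^2 * (norm (x - m))\<^sup>2"])
    show "integrable ?P (\<lambda>x. L^2 * (norm (x - m))\<^sup>2)" by (simp add: M2)
    show "AE x in ?P. norm ((norm (gradU x - gradU m))\<^sup>2) \<le> norm (L^2 * (norm (x - m))\<^sup>2)"
    proof (intro AE_I2)
      fix x
      have "(norm (gradU x - gradU m))\<^sup>2 \<le> (L * norm (x - m))\<^sup>2"
        using lip[of x m] by (intro power_mono) auto
      then show "norm ((norm (gradU x - gradU m))\<^sup>2) \<le> norm (L^2 * (norm (x - m))\<^sup>2)"
        by (simp add: power_mult_distrib)
    qed
  qed simp
  have IGx: "integrable ?P (\<lambda>x. gradU x \<bullet> (x - m))"
  proof (rule Bochner_Integration.integrable_bound[of _ "\<lambda>x. norm (gradU m) * norm (x - m) + L * (norm (x - m))\<^sup>2"])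
    show "integrable ?P (\<lambda>x. norm (gradU m) * norm (x - m) + L * (norm (x - m))\<^sup>2)"
      by (simp add: N1 M2)
    show "AE x in ?P. norm (gradU x \<bullet> (x - m)) \<le> norm (norm (gradU m) * norm (x - m) + L * (norm (x - m))\<^sup>2)"
    proof (intro AE_I2)
      fix x
      have "\<bar>gradU x \<bullet> (x - m)\<bar> \<le> norm (gradU x) * norm (x - m)" by (rule Cauchy_Schwarz_ineq2)
      also have "norm (gradU x) \<le> norm (gradU m) + L * norm (x - m)"
        using norm_triangle_sub[of "gradU x" "gradU m"] lip[of x m] by simp
      then have "norm (gradU x) * norm (x - m) \<le> (norm (gradU m) + L * norm (x - m)) * norm (x - m)"
        by (intro mult_right_mono) auto
      finally show "norm (gradU x \<bullet> (x - m)) \<le> norm (norm (gradU m) * norm (x - m) + L * (norm (x - m))\<^sup>2)"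
        using L by (simp add: algebra_simps power2_eq_square)
    qed
  qed simp
  have refl: "distr ?P lborel (\<lambda>x. m + (-1) *\<^sub>R (x - m)) = ?P"
    using gauss_push[OF S, of "-1" m] by simp
  have mean0: "(\<integral>x. (x - m) \<partial>?P) = 0"
  proof -
    have "(\<integral>x. (x - m) \<partial>?P) = (\<integral>x. (x - m) \<partial>(distr ?P lborel (\<lambda>x. m + (-1) *\<^sub>R (x - m))))"
      using refl by simp
    also have "\<dots> = (\<integral>x. (m + (-1) *\<^sub>R (x - m)) - m \<partial>?P)"
      by (subst integral_distr) auto
    also have "(\<lambda>x. (m + (-1) *\<^sub>R (x - m)) - m) = (\<lambda>x. - (x - m))" by (auto simp: fun_eq_iff)
    also have "(\<integral>x. - (x - m) \<partial>?P) = - (\<integral>x. (x - m) \<partial>?P)" by (rule integral_minus)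
    finally have h: "(\<integral>x. (x - m) \<partial>?P) = - (\<integral>x. (x - m) \<partial>?P)" .
    define a where "a = (\<integral>x. (x - m) \<partial>?P)"
    have h': "a = - a" using h unfolding a_def .
    have "a + a = a + (- a)" using h' by (rule arg_cong)
    then have "(2::real) *\<^sub>R a = 0" by (simp add: scaleR_2)
    then show ?thesis unfolding a_def by simp
  qed
  define Q where "Q = (\<lambda>y. y \<bullet> (matrix_inv S *v y))"
  have Qm: "(\<lambda>x. Q (x - m)) \<in> borel_measurable borel"
    unfolding Q_def by (intro borel_measurable_continuous_onI continuous_intros cont_mv)
  have IQ: "integrable ?P (\<lambda>x. Q (x - m))"
  proof (rule Bochner_Integration.integrable_bound[of _ "\<lambda>x. onorm ((*v) (matrix_inv S)) * (norm (x - m))\<^sup>2"])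
    show "integrable ?P (\<lambda>x. onorm ((*v) (matrix_inv S)) * (norm (x - m))\<^sup>2)" by (simp add: M2)
    show "(\<lambda>x. Q (x - m)) \<in> borel_measurable ?P" using Qm by simp
    show "AE x in ?P. norm (Q (x - m)) \<le> norm (onorm ((*v) (matrix_inv S)) * (norm (x - m))\<^sup>2)"
    proof (intro AE_I2)
      fix x
      have "\<bar>Q (x - m)\<bar> \<le> onorm ((*v) (matrix_inv S)) * (norm (x - m))\<^sup>2"
        unfolding Q_def by (rule quad_upper)
      then show "norm (Q (x - m)) \<le> norm (onorm ((*v) (matrix_inv S)) * (norm (x - m))\<^sup>2)" by simp
    qed
  qed
  define c0 where "c0 = ln (gauss_pdf m S m)"
  have lnpdf: "ln (gauss_pdf m S x) = c0 - Q (x - m) / 2" for x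
  proof -
    have "gauss_pdf m S x = gauss_pdf m S m * exp (- Q (x - m) / 2)"
      unfolding Q_def by (rule pdf_form)
    then show ?thesis unfolding c0_def using gauss_pdf_pos[OF S, of m m] by (simp add: ln_mult)
  qed
  have IL: "integrable ?P (\<lambda>x. ln (gauss_pdf m S x))"
    unfolding lnpdf using IQ by simp
  define G where "G = (\<integral>x. gradU x \<bullet> (x - m) \<partial>?P)"
  define M where "M = (\<integral>x. (norm (x - m))\<^sup>2 \<partial>?P)"
  have key: "real CARD('n) * ln t \<le> (t - 1) * G + L / 2 * (t - 1)^2 * M" if t: "0 < t" "t < 1" for t
  proof -
    define T where "T = (\<lambda>x. m + t *\<^sub>R (x - m))"
    have Tm[measurable]: "T \<in> borel_measurable borel" unfolding T_def by measurable
    have push: "distr ?P lborel T = gauss m ((t^2) *\<^sub>R S)"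
      unfolding T_def using gauss_push[OF S, of t m] t by simp
    have lnT: "ln (gauss_pdf m ((t^2) *\<^sub>R S) (T x)) = ln (gauss_pdf m S x) - real CARD('n) * ln t" for x
    proof -
      have e: "gauss_pdf m ((t^2) *\<^sub>R S) (T x) * t ^ CARD('n) = gauss_pdf m S x"
        using pdf_scale[OF S, of t m x] t unfolding T_def by simp
      have p: "gauss_pdf m ((t^2) *\<^sub>R S) (T x) > 0"
        using gauss_pdf_pos[OF posdef_scale[OF S]] t by simp
      have "ln (gauss_pdf m S x) = ln (gauss_pdf m ((t^2) *\<^sub>R S) (T x)) + ln (t ^ CARD('n))"
        unfolding e[symmetric] using p t by (simp add: ln_mult)
      then show ?thesis using t by (simp add: ln_realpow)
    qed
    have lnm: "(\<lambda>x. ln (gauss_pdf m ((t^2) *\<^sub>R S) x)) \<in> borel_measurable borel" by measurable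
    have F1: "free_energy U m ((t^2) *\<^sub>R S) = (\<integral>x. U (T x) \<partial>?P) + ((\<integral>x. ln (gauss_pdf m S x) \<partial>?P) - real CARD('n) * ln t)"
    proof -
      have "free_energy U m ((t^2) *\<^sub>R S) = (\<integral>x. U x \<partial>distr ?P lborel T) + (\<integral>x. ln (gauss_pdf m ((t^2) *\<^sub>R S) x) \<partial>distr ?P lborel T)"
        unfolding free_energy_def push ..
      also have "\<dots> = (\<integral>x. U (T x) \<partial>?P) + (\<integral>x. ln (gauss_pdf m ((t^2) *\<^sub>R S) (T x)) \<partial>?P)"
        using lnm by (simp add: integral_distr)
      also have "(\<integral>x. ln (gauss_pdf m ((t^2) *\<^sub>R S) (T x)) \<partial>?P) = (\<integral>x. ln (gauss_pdf m S x) - real CARD('n) * ln t \<partial>?P)"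
        unfolding lnT ..
      also have "\<dots> = (\<integral>x. ln (gauss_pdf m S x) \<partial>?P) - real CARD('n) * ln t"
        using IL by (simp add: pU)
      finally show ?thesis .
    qed
    have F0: "free_energy U m S = (\<integral>x. U x \<partial>?P) + (\<integral>x. ln (gauss_pdf m S x) \<partial>?P)"
      unfolding free_energy_def ..
    have A: "real CARD('n) * ln t \<le> (\<integral>x. U (T x) \<partial>?P) - (\<integral>x. U x \<partial>?P)"
      using mini[OF t] F0 F1 by linarith
    have pw: "U (T x) \<le> U x + (t - 1) * (gradU x \<bullet> (x - m)) + (L / 2 * (t - 1)^2) * (norm (x - m))\<^sup>2" for x
    proof -
      have "U (x + (t - 1) *\<^sub>R (x - m)) \<le> U x + gradU x \<bullet> ((t - 1) *\<^sub>R (x - m)) + L / 2 * (norm ((t - 1) *\<^sub>R (x - m)))\<^sup>2"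
        by (rule smooth)
      moreover have "x + (t - 1) *\<^sub>R (x - m) = T x" unfolding T_def by (simp add: algebra_simps)
      ultimately show ?thesis by (simp add: power_mult_distrib)
    qed
    have ITU: "integrable ?P (\<lambda>x. U (T x))" unfolding T_def by (rule IUT)
    have "(\<integral>x. U (T x) \<partial>?P) \<le> (\<integral>x. U x + (t - 1) * (gradU x \<bullet> (x - m)) + (L / 2 * (t - 1)^2) * (norm (x - m))\<^sup>2 \<partial>?P)"
      by (rule integral_mono[OF ITU _ pw]) (simp add: IU IGx M2)
    also have "\<dots> = (\<integral>x. U x \<partial>?P) + (t - 1) * G + (L / 2 * (t - 1)^2) * M"
      unfolding G_def M_def by (simp add: IU IGx M2)
    finally show ?thesis using A by (simp add: algebra_simps)
  qed
  have Gd: "G \<le> real CARD('n)"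
  proof (rule limit_le[of G "real CARD('n)" "L * M / 2"])
    fix s :: real assume s: "0 < s" "s < 1"
    have k: "real CARD('n) * ln (1 - s) \<le> (- s) * G + L / 2 * s^2 * M"
      using key[of "1 - s"] s by simp
    have lb: "real CARD('n) * (- ln (1 - s)) \<le> real CARD('n) * (s / (1 - s))"
      using ln_bound[OF s] by (intro mult_left_mono) auto
    have "s * G \<le> s * (real CARD('n) / (1 - s) + L * M / 2 * s)"
      using k lb s by (simp add: algebra_simps power2_eq_square)
    then show "G \<le> real CARD('n) / (1 - s) + L * M / 2 * s"
      using s by simp
  qed
  have IWv: "integrable ?P (\<lambda>x. gradU x - gradU m)" using IG by simp
  have Wb: "(\<integral>x. (norm (gradU x - gradU m))\<^sup>2 \<partial>?P) \<le> L * G"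
  proof -
    have "(\<integral>x. (norm (gradU x - gradU m))\<^sup>2 \<partial>?P) \<le> (\<integral>x. L * (gradU x \<bullet> (x - m)) - L * (gradU m \<bullet> (x - m)) \<partial>?P)"
    proof (rule integral_mono[OF IW2])
      show "integrable ?P (\<lambda>x. L * (gradU x \<bullet> (x - m)) - L * (gradU m \<bullet> (x - m)))"
        using IGx V1 by simp
      fix x
      show "(norm (gradU x - gradU m))\<^sup>2 \<le> L * (gradU x \<bullet> (x - m)) - L * (gradU m \<bullet> (x - m))"
        using cocoercive[OF L conv smooth, of x m] by (simp add: inner_diff_left algebra_simps)
    qed
    also have "\<dots> = L * G - L * (gradU m \<bullet> (\<integral>x. (x - m) \<partial>?P))"
      unfolding G_def using IGx V1 by simp
    finally show ?thesis using mean0 by simp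
  qed
  define c where "c = (\<integral>y. gradU y \<partial>?P)"
  define w where "w = c - gradU m"
  have intW: "(\<integral>x. gradU x - gradU m \<partial>?P) = w"
    unfolding w_def c_def using IG by (simp add: pU)
  have pe: "(norm (gradU x - c))\<^sup>2 = (norm (gradU x - gradU m))\<^sup>2 - 2 * ((gradU x - gradU m) \<bullet> w) + (norm w)\<^sup>2" for x
  proof -
    have "gradU x - c = (gradU x - gradU m) - w" unfolding w_def by simp
    then show ?thesis using norm_diff_sq[of "gradU x - gradU m" w] by (simp only:)
  qed
  have Ivar: "integrable ?P (\<lambda>x. (norm (gradU x - c))\<^sup>2)"
    unfolding pe using IW2 IWv by simp
  then show "integrable (gauss m S) (\<lambda>x. (norm (gradU x - (\<integral>y. gradU y \<partial>gauss m S)))\<^sup>2)"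
    unfolding c_def .
  have "(\<integral>x. (norm (gradU x - c))\<^sup>2 \<partial>?P) = (\<integral>x. (norm (gradU x - gradU m))\<^sup>2 \<partial>?P) - 2 * ((\<integral>x. gradU x - gradU m \<partial>?P) \<bullet> w) + (norm w)\<^sup>2"
    unfolding pe using IW2 IWv by (simp add: pU)
  also have "\<dots> = (\<integral>x. (norm (gradU x - gradU m))\<^sup>2 \<partial>?P) - (norm w)\<^sup>2"
    unfolding intW by (simp add: power2_norm_eq_inner)
  also have "\<dots> \<le> L * G" using Wb zero_le_power2[of "norm w"] by linarith
  also have "\<dots> \<le> L * real CARD('n)" using Gd L by simp
  finally show "(\<integral>x. (norm (gradU x - (\<integral>y. gradU y \<partial>gauss m S)))\<^sup>2 \<partial>gauss m S) \<le> L * real CARD('n)"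
    unfolding c_def .
qed

lemma sq_split: "(norm ((a::'a::real_normed_vector) - c))\<^sup>2 \<le> 2 * (norm (a - b))\<^sup>2 + 2 * (norm (b - c))\<^sup>2"
proof -
  have "norm (a - c) \<le> norm (a - b) + norm (b - c)" using norm_triangle_ineq[of "a - b" "b - c"] by simp
  then have "(norm (a - c))\<^sup>2 \<le> (norm (a - b) + norm (b - c))\<^sup>2" by (intro power_mono) auto
  also have "\<dots> \<le> 2 * (norm (a - b))\<^sup>2 + 2 * (norm (b - c))\<^sup>2"
    using zero_le_power2[of "norm (a - b) - norm (b - c)"] by (simp add: power2_eq_square algebra_simps)
  finally show ?thesis .
qed

theorem lemmaC7:
  fixes U :: "real^'n \<Rightarrow> real"
    and gradU :: "real^'n \<Rightarrow> real^'n"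
    and H :: "real^'n \<Rightarrow> real^'n \<Rightarrow> real^'n"
    and \<mu> L :: real
    and ms m :: "real^'n"
    and Ss S :: "real^'n^'n"
    and \<psi> :: "((real^'n) \<times> (real^'n)) measure"
  assumes mu_pos: "\<mu> > 0" and L_nonneg: "L \<ge> 0"
    and grad: "\<And>z. (U has_derivative (\<lambda>h. gradU z \<bullet> h)) (at z)"
    and hess: "\<And>z. (gradU has_derivative H z) (at z)"
    and hess_lower: "\<And>z h. \<mu> * (norm h)\<^sup>2 \<le> h \<bullet> H z h"
    and hess_upper: "\<And>z h. h \<bullet> H z h \<le> L * (norm h)\<^sup>2"
    and qs_BW: "pos_def_mat Ss"
    and qs_min: "\<And>m' S'. pos_def_mat S' \<Longrightarrow> free_energy U ms Ss \<le> free_energy U m' S'"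
    and q_BW: "pos_def_mat S"
    and psi_prob: "prob_space \<psi>"
    and psi_sets: "sets \<psi> = sets borel"
    and psi_fst: "distr \<psi> lborel fst = gauss m S"
    and psi_snd: "distr \<psi> lborel snd = gauss ms Ss"
  shows "(\<integral>\<^sup>+ z. ennreal ((norm (gradU z - (\<integral>x. gradU x \<partial>gauss ms Ss)))\<^sup>2) \<partial>gauss m S)
         \<le> ennreal (4 * L) * (\<integral>\<^sup>+ p. ennreal (bregman U gradU (fst p) (snd p)) \<partial>\<psi>)
           + ennreal (2 * real CARD('n) * L)"
proof -
  obtain b :: "real^'n" where b: "b \<in> Basis" using nonempty_Basis by blast
  have "\<mu> * (norm b)\<^sup>2 \<le> L * (norm b)\<^sup>2" using hess_lower[of b 0] hess_upper[of b 0] by linarith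
  then have "\<mu> \<le> L" using b by (simp add: norm_Basis)
  then have L: "L > 0" using mu_pos by linarith
  have tb: "U x + gradU x \<bullet> h + \<mu> / 2 * (norm h)\<^sup>2 \<le> U (x + h) \<and> U (x + h) \<le> U x + gradU x \<bullet> h + L / 2 * (norm h)\<^sup>2" for x h
    by (rule taylor_bounds[OF grad hess hess_lower hess_upper])
  have conv: "U x + gradU x \<bullet> h \<le> U (x + h)" for x h
  proof -
    have "0 \<le> \<mu> / 2 * (norm h)\<^sup>2" using mu_pos by simp
    then show ?thesis using tb[of x h] by linarith
  qed
  have smooth: "U (x + h) \<le> U x + gradU x \<bullet> h + L / 2 * (norm h)\<^sup>2" for x h
    using tb[of x h] by blast
  have contU: "continuous_on UNIV U"
    by (rule continuous_at_imp_continuous_on) (auto intro: has_derivative_continuous[OF grad])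
  have contG: "continuous_on UNIV gradU"
    by (rule continuous_at_imp_continuous_on) (auto intro: has_derivative_continuous[OF hess])
  have Um[measurable]: "U \<in> borel_measurable borel" by (rule borel_measurable_continuous_onI[OF contU])
  have Gm[measurable]: "gradU \<in> borel_measurable borel" by (rule borel_measurable_continuous_onI[OF contG])
  have psi_sets': "sets \<psi> = sets (borel \<Otimes>\<^sub>M borel)" unfolding borel_prod by (rule psi_sets)
  have psi_meas: "\<And>f. f \<in> borel_measurable (borel \<Otimes>\<^sub>M borel) \<Longrightarrow> f \<in> borel_measurable \<psi>"
    using measurable_cong_sets[OF psi_sets' refl] by blast
  have fst_m: "fst \<in> measurable \<psi> lborel"
    unfolding measurable_lborel1 by (rule psi_meas) simp
  have snd_m: "snd \<in> measurable \<psi> lborel"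
    unfolding measurable_lborel1 by (rule psi_meas) simp
  have P: "prob_space (gauss ms Ss)"
    using prob_space.prob_space_distr[OF psi_prob snd_m] psi_snd by simp
  have mini: "free_energy U ms Ss \<le> free_energy U ms ((t^2) *\<^sub>R Ss)" if "0 < t" "t < 1" for t
    using that by (intro qs_min posdef_scale[OF qs_BW]) simp
  define c where "c = (\<integral>x. gradU x \<partial>gauss ms Ss)"
  have Ivar: "integrable (gauss ms Ss) (\<lambda>x. (norm (gradU x - c))\<^sup>2)"
    and Vb: "(\<integral>x. (norm (gradU x - c))\<^sup>2 \<partial>gauss ms Ss) \<le> L * real CARD('n)"
    unfolding c_def by (rule variance_bound[OF P qs_BW L conv smooth Um Gm mini]; assumption)+
  have pw: "ennreal ((norm (gradU x - c))\<^sup>2) \<le> ennreal (4 * L) * ennreal (bregman U gradU x y) + ennreal (2 * (norm (gradU y - c))\<^sup>2)" for x y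
  proof -
    have br: "(norm (gradU x - gradU y))\<^sup>2 \<le> 2 * L * bregman U gradU x y"
      by (rule breg_lower[OF L conv smooth])
    have "0 \<le> 2 * L * bregman U gradU x y"
      using br zero_le_power2[of "norm (gradU x - gradU y)"] by linarith
    then have b0: "bregman U gradU x y \<ge> 0"
      using L by (simp add: zero_le_mult_iff)
    have "(norm (gradU x - c))\<^sup>2 \<le> 2 * (norm (gradU x - gradU y))\<^sup>2 + 2 * (norm (gradU y - c))\<^sup>2"
      by (rule sq_split)
    also have "\<dots> \<le> 4 * L * bregman U gradU x y + 2 * (norm (gradU y - c))\<^sup>2" using br by linarith
    finally have "ennreal ((norm (gradU x - c))\<^sup>2) \<le> ennreal (4 * L * bregman U gradU x y + 2 * (norm (gradU y - c))\<^sup>2)"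
      by (rule ennreal_leI)
    also have "\<dots> = ennreal (4 * L) * ennreal (bregman U gradU x y) + ennreal (2 * (norm (gradU y - c))\<^sup>2)"
    proof -
      have "ennreal (4 * L * bregman U gradU x y + 2 * (norm (gradU y - c))\<^sup>2) = ennreal (4 * L * bregman U gradU x y) + ennreal (2 * (norm (gradU y - c))\<^sup>2)"
        by (rule ennreal_plus) (use L b0 in auto)
      moreover have "ennreal (4 * L * bregman U gradU x y) = ennreal (4 * L) * ennreal (bregman U gradU x y)"
        by (rule ennreal_mult) (use L b0 in auto)
      ultimately show ?thesis by simp
    qed
    finally show ?thesis .
  qed
  have "(\<integral>\<^sup>+ z. ennreal ((norm (gradU z - c))\<^sup>2) \<partial>gauss m S)
      = (\<integral>\<^sup>+ p. ennreal ((norm (gradU (fst p) - c))\<^sup>2) \<partial>\<psi>)"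
    unfolding psi_fst[symmetric] by (subst nn_integral_distr[OF fst_m]) auto
  also have "\<dots> \<le> (\<integral>\<^sup>+ p. ennreal (4 * L) * ennreal (bregman U gradU (fst p) (snd p)) + ennreal (2 * (norm (gradU (snd p) - c))\<^sup>2) \<partial>\<psi>)"
    by (intro nn_integral_mono pw)
  also have "\<dots> = ennreal (4 * L) * (\<integral>\<^sup>+ p. ennreal (bregman U gradU (fst p) (snd p)) \<partial>\<psi>) + (\<integral>\<^sup>+ p. ennreal (2 * (norm (gradU (snd p) - c))\<^sup>2) \<partial>\<psi>)"
  proof -
    have m1: "(\<lambda>p. ennreal (bregman U gradU (fst p) (snd p))) \<in> borel_measurable \<psi>"
      by (rule psi_meas) (unfold bregman_def, measurable)
    have m2: "(\<lambda>p. ennreal (2 * (norm (gradU (snd p) - c))\<^sup>2)) \<in> borel_measurable \<psi>"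
      by (rule psi_meas) measurable
    show ?thesis using m1 m2 by (simp add: nn_integral_add nn_integral_cmult)
  qed
  also have "(\<integral>\<^sup>+ p. ennreal (2 * (norm (gradU (snd p) - c))\<^sup>2) \<partial>\<psi>) = (\<integral>\<^sup>+ z. ennreal (2 * (norm (gradU z - c))\<^sup>2) \<partial>gauss ms Ss)"
    unfolding psi_snd[symmetric] by (subst nn_integral_distr[OF snd_m]) auto
  also have "\<dots> = ennreal (\<integral>z. 2 * (norm (gradU z - c))\<^sup>2 \<partial>gauss ms Ss)"
    by (rule nn_integral_eq_integral) (use Ivar in auto)
  also have "\<dots> \<le> ennreal (2 * real CARD('n) * L)"
    using Vb by (intro ennreal_leI) (simp add: algebra_simps)
  finally show ?thesis unfolding c_def by (simp add: add_left_mono)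
qed

end
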